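(* For every labelled program $P$ and interpretation $I\subseteq \mathit{At}$: $I \in \mathit{JM}(P)$ if and only if $I \in \mathit{JM}(P^I)$.
   Context: Fix a finite non-empty set $\mathit{At}$ of propositional atoms. A labelled rule $r$ has the form $\ell : p_1 \vee \dots \vee p_m \leftarrow q_1 \wedge \dots \wedge q_n \wedge \neg s_1 \wedge \dots \wedge \neg s_j \wedge \neg\neg t_1 \wedge \dots \wedge \neg\neg t_k$ with $m,n,j,k \ge 0$ and atoms in $\mathit{At}$; $\mathit{Lb}(r)=\ell$, $\mathit{Hd}(r)=p_1\vee\dots\vee p_m$, $H(r)=\{p_1,\dots,p_m\}$, $\mathit{Bd}(r)$ is the whole antecedent, $\mathit{Bd}^+(r)=q_1\wedge\dots\wedge q_n$, $B^+(r)=\{q_1,\dots,q_n\}$, $\mathit{Bd}^-(r)=\neg s_1 \wedge \dots \wedge \neg s_j \wedge \neg\neg t_1 \wedge \dots \wedge \neg\neg t_k$. Empty disjunction is $\bot$, empty conjunction $\top$. A labelled program $P$ is a finite set of labelled rules with no repeated label; $\mathit{Lb}(P)$ is its set of labels. An interpretation $I\subseteq\mathit{At}$ is a (classical) model of $P$ if $I\models \mathit{Bd}(r)\to\mathit{Hd}(r)$ for every $r\in P$. The reduct is $P^I=\{\ \mathit{Lb}(r): \mathit{Hd}(r) \leftarrow \mathit{Bd}^+(r) \mid r \in P,\ I \models \mathit{Bd}^-(r)\ \}$. $\mathit{Sup}(I,P,p)=\{ r \in P \mid p \in H(r),\ I \models \mathit{Bd}(r)\}$. A support graph of a model $I$ under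 $P$ is a directed graph $G=\langle I,E,\lambda\rangle$ with vertex set $I$, edges $E\subseteq I\times I$ and a labelling $\lambda: I\to \mathit{Lb}(P)$ such that (i) $\lambda$ is injective, and (ii) for every $p\in I$, the rule $r\in P$ with $\mathit{Lb}(r)=\lambda(p)$ satisfies $r\in \mathit{Sup}(I,P,p)$ and $B^+(r)=\{q \mid (q,p)\in E\}$. An explanation is an acyclic support graph. A classical model $I$ of $P$ is a justified model of $P$ if there is some explanation of $I$ under $P$; $\mathit{JM}(P)$ denotes the set of justified models of $P$. *)

theory Defs
  imports Main
begin

text \<open>Atoms are the elements of a finite type 'a (so At = UNIV, finite and nonempty).
  A labelled rule  l : p1 | ... | pm <- q1 & ... & qn & ~s1 & ... & ~sj & ~~t1 & ... & ~~tk
  is represented as  Rule l {p1..pm} {q1..qn} {s1..sj} {t1..tk}.\<close>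

datatype ('l, 'a) rule = Rule (lbl: 'l) (H: "'a set") (Bpos: "'a set") (Bneg: "'a set") (Bnn: "'a set")

definition labelled_program :: "('l, 'a::finite) rule set \<Rightarrow> bool" where
  "labelled_program P \<longleftrightarrow> finite P \<and> inj_on lbl P"

definition Lb :: "('l, 'a) rule set \<Rightarrow> 'l set" where
  "Lb P = lbl ` P"

definition sat_negbody :: "'a set \<Rightarrow> ('l, 'a) rule \<Rightarrow> bool" where
  "sat_negbody I r \<longleftrightarrow> (\<forall>s\<in>Bneg r. s \<notin> I) \<and> (\<forall>t\<in>Bnn r. t \<in> I)"

definition sat_body :: "'a set \<Rightarrow> ('l, 'a) rule \<Rightarrow> bool" where
  "sat_body I r \<longleftrightarrow> Bpos r \<subseteq> I \<and> sat_negbody I r"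

definition sat_head :: "'a set \<Rightarrow> ('l, 'a) rule \<Rightarrow> bool" where
  "sat_head I r \<longleftrightarrow> (\<exists>p\<in>H r. p \<in> I)"

definition is_model :: "'a set \<Rightarrow> ('l, 'a) rule set \<Rightarrow> bool" where
  "is_model I P \<longleftrightarrow> (\<forall>r\<in>P. sat_body I r \<longrightarrow> sat_head I r)"

definition reduct :: "('l, 'a) rule set \<Rightarrow> 'a set \<Rightarrow> ('l, 'a) rule set" where
  "reduct P I = {Rule (lbl r) (H r) (Bpos r) {} {} | r. r \<in> P \<and> sat_negbody I r}"

definition Sup_rules :: "'a set \<Rightarrow> ('l, 'a) rule set \<Rightarrow> 'a \<Rightarrow> ('l, 'a) rule set" where
  "Sup_rules I P p = {r \<in> P. p \<in> H r \<and> sat_body I r}"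

definition support_graph :: "('l, 'a) rule set \<Rightarrow> 'a set \<Rightarrow> ('a \<times> 'a) set \<Rightarrow> ('a \<Rightarrow> 'l) \<Rightarrow> bool" where
  "support_graph P I E lam \<longleftrightarrow>
     E \<subseteq> I \<times> I \<and> lam ` I \<subseteq> Lb P \<and> inj_on lam I \<and>
     (\<forall>p\<in>I. \<forall>r\<in>P. lbl r = lam p \<longrightarrow> r \<in> Sup_rules I P p \<and> Bpos r = {q. (q, p) \<in> E})"

definition explanation :: "('l, 'a) rule set \<Rightarrow> 'a set \<Rightarrow> ('a \<times> 'a) set \<Rightarrow> ('a \<Rightarrow> 'l) \<Rightarrow> bool" where
  "explanation P I E lam \<longleftrightarrow> support_graph P I E lam \<and> acyclic E"

definition JM :: "('l, 'a) rule set \<Rightarrow> 'a set set" where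
  "JM P = {I. is_model I P \<and> (\<exists>E lam. explanation P I E lam)}"

end

theory Submission
  imports Defs
begin

lemma red_mem: "r' \<in> reduct P I \<longleftrightarrow> (\<exists>r\<in>P. sat_negbody I r \<and> r' = Rule (lbl r) (H r) (Bpos r) {} {})"
  unfolding reduct_def by blast

lemma model_iff: "is_model I P \<longleftrightarrow> is_model I (reduct P I)"
proof
  assume m: "is_model I P"
  show "is_model I (reduct P I)" unfolding is_model_def
  proof (intro ballI impI)
    fix r' assume "r' \<in> reduct P I" "sat_body I r'"
    then obtain r where "r \<in> P" "sat_negbody I r" "r' = Rule (lbl r) (H r) (Bpos r) {} {}"
      using red_mem by blast
    with m \<open>sat_body I r'\<close> show "sat_head I r'"
      unfolding is_model_def sat_body_def sat_head_def by auto
  qed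
next
  assume m: "is_model I (reduct P I)"
  show "is_model I P" unfolding is_model_def
  proof (intro ballI impI)
    fix r assume r: "r \<in> P" "sat_body I r"
    then have "Rule (lbl r) (H r) (Bpos r) {} {} \<in> reduct P I"
      using red_mem sat_body_def by blast
    with m r show "sat_head I r"
      unfolding is_model_def sat_body_def sat_head_def sat_negbody_def by fastforce
  qed
qed

lemma sg_fwd:
  assumes inj: "inj_on lbl P" and sg: "support_graph P I E lam"
  shows "support_graph (reduct P I) I E lam"
  unfolding support_graph_def
proof (intro conjI ballI impI)
  show "E \<subseteq> I \<times> I" "inj_on lam I" using sg unfolding support_graph_def by auto
  have key: "\<And>p. p \<in> I \<Longrightarrow> \<exists>r\<in>P. lbl r = lam p \<and> r \<in> Sup_rules I P p \<and> Bpos r = {q. (q, p) \<in> E}"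
  proof -
    fix p assume p: "p \<in> I"
    then have "lam p \<in> Lb P" using sg unfolding support_graph_def by auto
    then obtain r where r: "r \<in> P" "lbl r = lam p" unfolding Lb_def by auto
    then show "\<exists>r\<in>P. lbl r = lam p \<and> r \<in> Sup_rules I P p \<and> Bpos r = {q. (q, p) \<in> E}"
      using sg p unfolding support_graph_def by blast
  qed
  show "lam ` I \<subseteq> Lb (reduct P I)"
  proof
    fix x assume "x \<in> lam ` I"
    then obtain p where p: "p \<in> I" "x = lam p" by auto
    from key[OF p(1)] obtain r where r: "r\<in>P" "lbl r = lam p" "r \<in> Sup_rules I P p" by blast
    then have "sat_negbody I r" unfolding Sup_rules_def sat_body_def by auto
    then have "Rule (lbl r) (H r) (Bpos r) {} {} \<in> reduct P I" using r red_mem by blast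
    then show "x \<in> Lb (reduct P I)" unfolding Lb_def using r p by force
  qed
  fix p r' assume p: "p \<in> I" and r': "r' \<in> reduct P I" "lbl r' = lam p"
  from r' obtain r0 where r0: "r0 \<in> P" "sat_negbody I r0" "r' = Rule (lbl r0) (H r0) (Bpos r0) {} {}"
    using red_mem by blast
  from key[OF p] obtain r where r: "r\<in>P" "lbl r = lam p" "r \<in> Sup_rules I P p" "Bpos r = {q. (q, p) \<in> E}" by blast
  have "r0 = r" using inj r0 r r' by (metis inj_onD rule.sel(1))
  then show "r' \<in> Sup_rules I (reduct P I) p" "Bpos r' = {q. (q, p) \<in> E}"
    using r r0 r' unfolding Sup_rules_def sat_body_def sat_negbody_def by auto
qed

lemma sg_bwd:
  assumes inj: "inj_on lbl P" and sg: "support_graph (reduct P I) I E lam"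
  shows "support_graph P I E lam"
  unfolding support_graph_def
proof (intro conjI ballI impI)
  show "E \<subseteq> I \<times> I" "inj_on lam I" using sg unfolding support_graph_def by auto
  have key: "\<And>p. p \<in> I \<Longrightarrow> \<exists>r0\<in>P. sat_negbody I r0 \<and> lbl r0 = lam p \<and> p \<in> H r0 \<and> Bpos r0 \<subseteq> I \<and> Bpos r0 = {q. (q, p) \<in> E}"
  proof -
    fix p assume p: "p \<in> I"
    then have "lam p \<in> Lb (reduct P I)" using sg unfolding support_graph_def by auto
    then obtain r' where r': "r' \<in> reduct P I" "lbl r' = lam p" unfolding Lb_def by auto
    then have h: "r' \<in> Sup_rules I (reduct P I) p \<and> Bpos r' = {q. (q, p) \<in> E}"
      using sg p unfolding support_graph_def by blast
    from r' obtain r0 where r0: "r0 \<in> P" "sat_negbody I r0" "r' = Rule (lbl r0) (H r0) (Bpos r0) {} {}"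
      using red_mem by blast
    show "\<exists>r0\<in>P. sat_negbody I r0 \<and> lbl r0 = lam p \<and> p \<in> H r0 \<and> Bpos r0 \<subseteq> I \<and> Bpos r0 = {q. (q, p) \<in> E}"
      using h r0 r' unfolding Sup_rules_def sat_body_def by auto
  qed
  show "lam ` I \<subseteq> Lb P"
    using key unfolding Lb_def by force
  fix p r assume p: "p \<in> I" and r: "r \<in> P" "lbl r = lam p"
  from key[OF p] obtain r0 where r0: "r0\<in>P" "sat_negbody I r0" "lbl r0 = lam p" "p \<in> H r0" "Bpos r0 \<subseteq> I" "Bpos r0 = {q. (q, p) \<in> E}" by blast
  have "r0 = r" using inj r0 r by (metis inj_onD)
  show "r \<in> Sup_rules I P p" "Bpos r = {q. (q, p) \<in> E}"
    using r0 r \<open>r0 = r\<close> unfolding Sup_rules_def sat_body_def by auto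
qed

theorem corollary1:
  fixes P :: "('l, 'a::finite) rule set" and I :: "'a set"
  assumes "labelled_program P"
  shows "I \<in> JM P \<longleftrightarrow> I \<in> JM (reduct P I)"
proof -
  have inj: "inj_on lbl P" using assms unfolding labelled_program_def by auto
  show ?thesis
    unfolding JM_def explanation_def using model_iff sg_fwd[OF inj] sg_bwd[OF inj] by blast
qed

end
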